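(* Let $\mathcal X$ be a finite set, $\mu\in\mathbb R^{\mathcal X}$ and $\sigma\in(0,\infty)^{\mathcal X}$, and let $\tilde F=(\tilde F_x)_{x\in\mathcal X}$ have independent entries $\tilde F_x\sim\mathcal N(\mu_x,\sigma_x^2)$. Let $\epsilon\in(0,1/4]$ and $\tilde\epsilon:=-\Phi^{-1}(2\epsilon)$. Write $\mu^{\max}=\max_x\mu_x$, $\mu^{\min}=\min_x\mu_x$, $\sigma^{\max}=\max_x\sigma_x$, $\sigma^{\min}=\min_x\sigma_x$, and set $$n=\left\lceil \frac{\mu^{\max}-\mu^{\min}+2\tilde\epsilon\,\sigma^{\max}}{2\sqrt{2\pi}\,\epsilon\,\sigma^{\min}}\right\rceil+2,$$ $f_0=-\infty$, $f_n=+\infty$, and $f_i=\mu^{\min}-\tilde\epsilon\,\sigma^{\max}+\frac{i-1}{n-2}\left(\mu^{\max}-\mu^{\min}+2\tilde\epsilon\,\sigma^{\max}\right)$ for $0<i<n$. Then for every $x\in\mathcal X$, $$\Big|\tilde p_x-\sum_{i=0}^{n-1}\frac{g^x(f_{i+1})+g^x(f_i)}{2}\,\mathbb P[\tilde F_x\in(f_i,f_{i+1}]]\Big|\le\epsilon .$$ Moreover, for fixed $\mu,\sigma$, $n\in\Theta\big(\sqrt{\log(1/\epsilon)}/\epsilon\big)$ as $\epsilon\to0^+$.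
   Context: $\Phi$ and $\phi$ denote the standard Gaussian CDF and PDF. $\tilde p_x:=\mathbb P[\tilde F_x\ge\tilde F_z\ \forall z\neq x]$. For $f\in\mathbb R\cup\{\pm\infty\}$, $g^x(f):=\prod_{z\in\mathcal X\setminus\{x\}}\mathbb P[\tilde F_z\le f]$, so $g^x(-\infty)=0$ and $g^x(+\infty)=1$. *)

theory Defs
  imports "HOL-Probability.Probability" "HOL-Library.Landau_Symbols"
begin

definition Phi :: "real \<Rightarrow> real" where
  "Phi t = measure (density lborel (\<lambda>s. ennreal (std_normal_density s))) {..t}"

definition Phi_inv :: "real \<Rightarrow> real" where
  "Phi_inv p = (THE t. Phi t = p)"

definition eps_tilde :: "real \<Rightarrow> real" where
  "eps_tilde \<epsilon> = - Phi_inv (2 * \<epsilon>)"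

definition grid_n :: "'a set \<Rightarrow> ('a \<Rightarrow> real) \<Rightarrow> ('a \<Rightarrow> real) \<Rightarrow> real \<Rightarrow> nat" where
  "grid_n X \<mu> \<sigma> \<epsilon> =
     nat \<lceil>(Max (\<mu> ` X) - Min (\<mu> ` X) + 2 * eps_tilde \<epsilon> * Max (\<sigma> ` X))
           / (2 * sqrt (2 * pi) * \<epsilon> * Min (\<sigma> ` X))\<rceil> + 2"

definition grid_f :: "'a set \<Rightarrow> ('a \<Rightarrow> real) \<Rightarrow> ('a \<Rightarrow> real) \<Rightarrow> real \<Rightarrow> nat \<Rightarrow> ereal" where
  "grid_f X \<mu> \<sigma> \<epsilon> i =
     (if i = 0 then -\<infinity>
      else if i \<ge> grid_n X \<mu> \<sigma> \<epsilon> then \<infinity>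
      else ereal (Min (\<mu> ` X) - eps_tilde \<epsilon> * Max (\<sigma> ` X)
             + (real i - 1) / (real (grid_n X \<mu> \<sigma> \<epsilon>) - 2)
               * (Max (\<mu> ` X) - Min (\<mu> ` X) + 2 * eps_tilde \<epsilon> * Max (\<sigma> ` X))))"

definition g_fun :: "'b measure \<Rightarrow> ('a \<Rightarrow> 'b \<Rightarrow> real) \<Rightarrow> 'a set \<Rightarrow> 'a \<Rightarrow> ereal \<Rightarrow> real" where
  "g_fun M F X x f = (\<Prod>z\<in>X - {x}. measure M {\<omega> \<in> space M. ereal (F z \<omega>) \<le> f})"

definition p_tilde :: "'b measure \<Rightarrow> ('a \<Rightarrow> 'b \<Rightarrow> real) \<Rightarrow> 'a set \<Rightarrow> 'a \<Rightarrow> real" where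
  "p_tilde M F X x = measure M {\<omega> \<in> space M. \<forall>z\<in>X - {x}. F x \<omega> \<ge> F z \<omega>}"

end

theory Submission
  imports Defs
begin


abbreviation stdN :: "real measure" where
  "stdN \<equiv> density lborel (\<lambda>s. ennreal (std_normal_density s))"

lemma stdN_prob: "prob_space stdN"
  by (rule prob_space_normal_density) simp

interpretation stdN: prob_space stdN by (rule stdN_prob)

lemma sets_stdN[simp, measurable_cong]: "sets stdN = sets borel" by simp
lemma space_stdN[simp]: "space stdN = UNIV" by simp

lemma emeasure_stdN: "A \<in> sets borel \<Longrightarrow>
   emeasure stdN A = (\<integral>\<^sup>+ s. ennreal (std_normal_density s) * indicator A s \<partial>lborel)"
  by (subst emeasure_density) auto

lemma std_le: "std_normal_density s \<le> 1 / sqrt (2*pi)"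
proof -
  have "exp (- (s\<^sup>2 / 2)) \<le> 1" by simp
  then show ?thesis by (simp add: std_normal_density_def divide_right_mono)
qed

lemma std_mono: "s\<^sup>2 \<le> m\<^sup>2 \<Longrightarrow> std_normal_density m \<le> std_normal_density s"
  by (simp add: std_normal_density_def divide_right_mono)

lemma stdN_Ioc_upper:
  assumes "a \<le> b"
  shows "measure stdN {a<..b} \<le> (b - a) / sqrt (2*pi)"
proof -
  have "emeasure stdN {a<..b} \<le> (\<integral>\<^sup>+ s. ennreal (1 / sqrt (2*pi)) * indicator {a<..b} s \<partial>lborel)"
    unfolding emeasure_stdN[of "{a<..b}", simplified]
    by (intro nn_integral_mono) (auto simp: indicator_def std_le)
  also have "\<dots> = ennreal (1 / sqrt (2*pi)) * ennreal (b - a)"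
    using assms by (subst nn_integral_cmult_indicator) auto
  also have "\<dots> = ennreal ((b - a) / sqrt (2*pi))"
    using assms by (simp add: ennreal_mult'[symmetric])
  finally show ?thesis
    using assms unfolding stdN.emeasure_eq_measure by (simp add: ennreal_le_iff)
qed

lemma stdN_Ioc_lower:
  assumes "a \<le> b"
  shows "(b - a) * std_normal_density (max \<bar>a\<bar> \<bar>b\<bar>) \<le> measure stdN {a<..b}"
proof -
  have "ennreal ((b - a) * std_normal_density (max \<bar>a\<bar> \<bar>b\<bar>))
      = ennreal (std_normal_density (max \<bar>a\<bar> \<bar>b\<bar>)) * ennreal (b - a)"
    using assms by (simp add: ennreal_mult'[symmetric] mult.commute)
  also have "\<dots> = (\<integral>\<^sup>+ s. ennreal (std_normal_density (max \<bar>a\<bar> \<bar>b\<bar>)) * indicator {a<..b} s \<partial>lborel)"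
    using assms by (subst nn_integral_cmult_indicator) auto
  also have "\<dots> \<le> emeasure stdN {a<..b}"
    unfolding emeasure_stdN[of "{a<..b}", simplified]
  proof (intro nn_integral_mono)
    fix s
    show "ennreal (std_normal_density (max \<bar>a\<bar> \<bar>b\<bar>)) * indicator {a<..b} s
         \<le> ennreal (std_normal_density s) * indicator {a<..b} s"
    proof (cases "s \<in> {a<..b}")
      case True
      then have "\<bar>s\<bar> \<le> max \<bar>a\<bar> \<bar>b\<bar>" by auto
      then have "s\<^sup>2 \<le> (max \<bar>a\<bar> \<bar>b\<bar>)\<^sup>2"
        by (metis abs_ge_zero power2_abs power_mono)
      then show ?thesis using True std_mono by auto
    qed auto
  qed
  finally show ?thesis
    unfolding stdN.emeasure_eq_measure by (simp add: ennreal_le_iff)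
qed

lemma Phi_def2: "Phi t = measure stdN {..t}"
  by (simp add: Phi_def)

lemma Phi_diff:
  assumes "a \<le> b" shows "Phi b - Phi a = measure stdN {a<..b}"
proof -
  have "{..b} = {..a} \<union> {a<..b}" using assms by auto
  moreover have "measure stdN ({..a} \<union> {a<..b}) = measure stdN {..a} + measure stdN {a<..b}"
    by (rule stdN.finite_measure_Union) auto
  ultimately have "measure stdN {..b} = measure stdN {..a} + measure stdN {a<..b}"
    by simp
  then show ?thesis by (simp add: Phi_def2)
qed

lemma Phi_mono: "a \<le> b \<Longrightarrow> Phi a \<le> Phi b"
proof -
  assume "a \<le> b"
  have "0 \<le> measure stdN {a<..b}" by simp
  then show ?thesis using Phi_diff[OF \<open>a \<le> b\<close>] by linarith
qed

lemma Phi_strict_mono: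
  assumes "a < b" shows "Phi a < Phi b"
proof -
  have "0 < (b - a) * std_normal_density (max \<bar>a\<bar> \<bar>b\<bar>)"
    using assms by (simp add: normal_density_pos)
  also have "\<dots> \<le> Phi b - Phi a" using Phi_diff[of a b] stdN_Ioc_lower[of a b] assms by simp
  finally show ?thesis by simp
qed

lemma Phi_lipschitz: "\<bar>Phi b - Phi a\<bar> \<le> \<bar>b - a\<bar> / sqrt (2*pi)"
proof (cases "a \<le> b")
  case True
  then show ?thesis using Phi_diff[of a b] stdN_Ioc_upper[of a b] Phi_mono[of a b] by simp
next
  case False
  then show ?thesis using Phi_diff[of b a] stdN_Ioc_upper[of b a] Phi_mono[of b a] by simp
qed

lemma Phi_cont: "continuous_on S Phi"
proof -
  have "lipschitz_on (1 / sqrt (2*pi)) S Phi"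
    unfolding lipschitz_on_def dist_real_def
    using Phi_lipschitz by (auto simp: abs_minus_commute)
  then show ?thesis by (rule lipschitz_on_continuous_on)
qed

lemma stdN_singleton: "measure stdN {x} = 0"
proof (rule ccontr)
  assume "measure stdN {x} \<noteq> 0"
  then have m: "measure stdN {x} > 0" using measure_nonneg[of stdN "{x}"] by linarith
  define d where "d = measure stdN {x} * sqrt (2*pi) / 2"
  have d: "d > 0" using m by (simp add: d_def)
  have "measure stdN {x} \<le> measure stdN {x - d<..x}"
    using d by (intro stdN.finite_measure_mono) auto
  also have "\<dots> \<le> (x - (x - d)) / sqrt (2*pi)"
    using d by (intro stdN_Ioc_upper) auto
  also have "\<dots> = measure stdN {x} / 2" by (simp add: d_def)
  finally show False using m by simp
qed

lemma stdN_reflect: "emeasure stdN {..-x} = emeasure stdN {x..}"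
proof -
  have "emeasure stdN {..-x} = (\<integral>\<^sup>+ s. ennreal (std_normal_density s) * indicator {..-x} s \<partial>lborel)"
    by (rule emeasure_stdN) simp
  also have "\<dots> = ennreal \<bar>-1\<bar> * (\<integral>\<^sup>+ s. ennreal (std_normal_density (0 + -1 * s)) * indicator {..-x} (0 + -1 * s) \<partial>lborel)"
    by (rule nn_integral_real_affine) auto
  also have "\<dots> = (\<integral>\<^sup>+ s. ennreal (std_normal_density s) * indicator {x..} s \<partial>lborel)"
    by (auto simp: std_normal_density_def indicator_def intro!: nn_integral_cong)
  also have "\<dots> = emeasure stdN {x..}"
    by (rule emeasure_stdN[symmetric]) simp
  finally show ?thesis .
qed

lemma Phi_neg: "Phi (-x) = 1 - Phi x"
proof -
  have "Phi (-x) = measure stdN {x..}"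
    using stdN_reflect[of x] by (simp add: Phi_def2 measure_def)
  also have "{x..} = {x} \<union> {x<..}" by auto
  also have "measure stdN ({x} \<union> {x<..}) = measure stdN {x} + measure stdN {x<..}"
    by (rule stdN.finite_measure_Union) auto
  also have "measure stdN {x<..} = measure stdN (space stdN - {..x})"
    by (intro arg_cong[where f="measure stdN"]) auto
  also have "\<dots> = 1 - Phi x"
    by (subst stdN.prob_compl) (auto simp: Phi_def2)
  finally show ?thesis by (simp add: stdN_singleton)
qed

lemma Phi_0: "Phi 0 = 1/2"
  using Phi_neg[of 0] by simp

lemma Phi_tail:
  assumes "0 \<le> t" shows "Phi (-t) \<le> exp (- t\<^sup>2 / 2) / 2"
proof -
  have "emeasure stdN {..-t} = (\<integral>\<^sup>+ s. ennreal (std_normal_density s) * indicator {..-t} s \<partial>lborel)"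
    by (rule emeasure_stdN) simp
  also have "\<dots> \<le> (\<integral>\<^sup>+ s. ennreal (exp (- t\<^sup>2 / 2)) * (ennreal (std_normal_density (t + 1 * s)) * indicator {..0} (t + 1 * s)) \<partial>lborel)"
  proof (intro nn_integral_mono)
    fix s
    show "ennreal (std_normal_density s) * indicator {..-t} s
         \<le> ennreal (exp (- t\<^sup>2 / 2)) * (ennreal (std_normal_density (t + 1 * s)) * indicator {..0} (t + 1 * s))"
    proof (cases "s \<le> -t")
      case True
      have "t * (t + s) \<le> 0" using True assms by (simp add: mult_nonneg_nonpos)
      then have "- s\<^sup>2 / 2 \<le> - t\<^sup>2 / 2 + - (t + s)\<^sup>2 / 2"
        by (simp add: power2_eq_square algebra_simps)
      then have "exp (- s\<^sup>2 / 2) \<le> exp (- t\<^sup>2 / 2) * exp (- (t + s)\<^sup>2 / 2)"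
        by (simp add: exp_add[symmetric])
      then have "std_normal_density s \<le> exp (- t\<^sup>2 / 2) * std_normal_density (t + s)"
        by (simp add: std_normal_density_def divide_right_mono)
      then show ?thesis using True
        by (simp add: ennreal_mult'[symmetric] indicator_def)
    qed auto
  qed
  also have "\<dots> = ennreal (exp (- t\<^sup>2 / 2)) * (\<integral>\<^sup>+ s. ennreal (std_normal_density (t + 1 * s)) * indicator {..0} (t + 1 * s) \<partial>lborel)"
    by (rule nn_integral_cmult) simp
  also have "(\<integral>\<^sup>+ s. ennreal (std_normal_density (t + 1 * s)) * indicator {..0} (t + 1 * s) \<partial>lborel)
      = (\<integral>\<^sup>+ s. ennreal (std_normal_density s) * indicator {..0} s \<partial>lborel)"
    using nn_integral_real_affine[of "\<lambda>s. ennreal (std_normal_density s) * indicator {..0} s" 1 t]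
    by simp
  also have "\<dots> = emeasure stdN {..0}"
    by (rule emeasure_stdN[symmetric]) simp
  also have "\<dots> = ennreal (1/2)"
  proof -
    have h: "measure stdN {..0} = 1/2" using Phi_0 Phi_def2 by simp
    show ?thesis by (simp add: stdN.emeasure_eq_measure h)
  qed
  finally have X: "emeasure stdN {..-t} \<le> ennreal (exp (- t\<^sup>2 / 2)) * ennreal (1/2)" .
  have e: "ennreal (exp (- t\<^sup>2 / 2)) * ennreal (1/2) = ennreal (exp (- t\<^sup>2 / 2) / 2)"
    by (subst ennreal_mult[symmetric]) auto
  have "ennreal (measure stdN {..-t}) \<le> ennreal (exp (- t\<^sup>2 / 2) / 2)"
    using X unfolding e stdN.emeasure_eq_measure .
  then show ?thesis unfolding Phi_def2 by (simp add: ennreal_le_iff del: ennreal_le_iff2)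
qed

lemma Phi_inv:
  assumes "0 < p" "p \<le> 1/2"
  shows "Phi (Phi_inv p) = p \<and> Phi_inv p \<le> 0"
proof -
  define T where "T = sqrt (2 * ln (1/p))"
  have lnp: "0 \<le> ln (1/p)" using assms by simp
  have T0: "0 \<le> T" using lnp by (simp add: T_def)
  have T2: "T\<^sup>2 = 2 * ln (1/p)" using lnp by (simp add: T_def)
  have l: "ln (1/p) = - ln p" using assms by (simp add: ln_div)
  have "- T\<^sup>2 / 2 = ln p" using T2 l by simp
  then have "exp (- T\<^sup>2 / 2) = p" using assms by simp
  then have a: "Phi (-T) \<le> p" using Phi_tail[OF T0] assms by simp
  have b: "p \<le> Phi 0" using Phi_0 assms by simp
  have c: "- T \<le> 0" using T0 by simp
  obtain t0 where t0: "-T \<le> t0" "t0 \<le> 0" "Phi t0 = p"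
    using IVT'[of Phi "-T" p 0, OF a b c Phi_cont] by blast
  have uniq: "t = t0" if "Phi t = p" for t
  proof -
    have "\<not> t < t0" using Phi_strict_mono[of t t0] that t0(3) by auto
    moreover have "\<not> t0 < t" using Phi_strict_mono[of t0 t] that t0(3) by auto
    ultimately show "t = t0" by simp
  qed
  have "Phi_inv p = t0" unfolding Phi_inv_def
    by (rule the_equality) (rule t0(3), rule uniq)
  then show ?thesis using t0 by simp
qed

lemma eps_tilde:
  assumes "0 < e" "e \<le> 1/4"
  shows "Phi (- eps_tilde e) = 2 * e" "0 \<le> eps_tilde e"
  using Phi_inv[of "2*e"] assms by (auto simp: eps_tilde_def)

lemma Phi_gt: "measure stdN {x<..} = 1 - Phi x"
proof -
  have "measure stdN {x<..} = measure stdN (space stdN - {..x})"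
    by (intro arg_cong[where f="measure stdN"]) auto
  also have "\<dots> = 1 - Phi x"
    by (subst stdN.prob_compl) (auto simp: Phi_def2)
  finally show ?thesis .
qed

lemma rv_std:
  assumes "distributed M lborel Y (\<lambda>t. ennreal (std_normal_density t))" "A \<in> sets borel"
  shows "measure M (Y -` A \<inter> space M) = measure stdN A"
proof -
  have "emeasure M (Y -` A \<inter> space M) = emeasure stdN A"
    using distributed_emeasure[OF assms(1), of A] assms(2) emeasure_stdN[OF assms(2)] by simp
  then show ?thesis by (simp add: measure_def)
qed

lemma dle: "0 < (s::real) \<Longrightarrow> ((a - m) / s \<le> (b - m) / s) \<longleftrightarrow> a \<le> b"
  by (simp add: divide_le_cancel)
lemma dlt: "0 < (s::real) \<Longrightarrow> ((a - m) / s < (b - m) / s) \<longleftrightarrow> a < b"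
  by (simp add: divide_less_cancel)

context
  fixes M :: "'b measure" and F :: "'b \<Rightarrow> real" and \<mu> \<sigma> :: real
  assumes P: "prob_space M" and sig: "0 < \<sigma>"
    and D: "distributed M lborel F (\<lambda>t. ennreal (normal_density \<mu> \<sigma> t))"
begin

lemma DY: "distributed M lborel (\<lambda>x. (F x - \<mu>) / \<sigma>) (\<lambda>t. ennreal (std_normal_density t))"
  using prob_space.normal_standard_normal_convert[OF P sig] D by simp

lemma normal_le: "measure M {\<omega>\<in>space M. F \<omega> \<le> c} = Phi ((c - \<mu>) / \<sigma>)"
proof -
  have eq: "{\<omega>\<in>space M. F \<omega> \<le> c} = (\<lambda>x. (F x - \<mu>) / \<sigma>) -` {..(c - \<mu>) / \<sigma>} \<inter> space M"
    by (rule set_eqI) (auto simp: dle[OF sig])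
  have "measure M {\<omega>\<in>space M. F \<omega> \<le> c} = measure stdN {..(c - \<mu>) / \<sigma>}"
    unfolding eq by (rule rv_std[OF DY]) simp
  then show ?thesis by (simp only: Phi_def2)
qed

lemma normal_gt: "measure M {\<omega>\<in>space M. c < F \<omega>} = Phi (- ((c - \<mu>) / \<sigma>))"
proof -
  have eq: "{\<omega>\<in>space M. c < F \<omega>} = (\<lambda>x. (F x - \<mu>) / \<sigma>) -` {(c - \<mu>) / \<sigma><..} \<inter> space M"
    by (rule set_eqI) (auto simp: dlt[OF sig])
  have "measure M {\<omega>\<in>space M. c < F \<omega>} = measure stdN {(c - \<mu>) / \<sigma><..}"
    unfolding eq by (rule rv_std[OF DY]) simp
  then show ?thesis by (simp only: Phi_gt Phi_neg)
qed

lemma normal_Ioc: "a \<le> b \<Longrightarrow>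
   measure M {\<omega>\<in>space M. a < F \<omega> \<and> F \<omega> \<le> b} = Phi ((b - \<mu>) / \<sigma>) - Phi ((a - \<mu>) / \<sigma>)"
proof -
  assume ab: "a \<le> b"
  have eq: "{\<omega>\<in>space M. a < F \<omega> \<and> F \<omega> \<le> b} = (\<lambda>x. (F x - \<mu>) / \<sigma>) -` {(a - \<mu>) / \<sigma><..(b - \<mu>) / \<sigma>} \<inter> space M"
    by (rule set_eqI) (auto simp: dle[OF sig] dlt[OF sig])
  have le: "(a - \<mu>) / \<sigma> \<le> (b - \<mu>) / \<sigma>" using ab dle[OF sig] by blast
  have "measure M {\<omega>\<in>space M. a < F \<omega> \<and> F \<omega> \<le> b} = measure stdN {(a - \<mu>) / \<sigma><..(b - \<mu>) / \<sigma>}"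
    unfolding eq by (rule rv_std[OF DY]) simp
  then show ?thesis by (simp only: Phi_diff[OF le])
qed

end



lemma mid_abs: "(y::real) \<le> q \<Longrightarrow> q \<le> x \<Longrightarrow> \<bar>q - (x + y) / 2\<bar> \<le> (x - y) / 2"
  by (auto simp: abs_if field_simps)

lemma sum_bound:
  fixes a G q :: "nat \<Rightarrow> real"
  assumes "\<And>i. i<n \<Longrightarrow> a i * G i \<le> q i" "\<And>i. i<n \<Longrightarrow> q i \<le> a i * G (Suc i)"
    "\<And>i. i<n \<Longrightarrow> 0 \<le> a i" "\<And>i. i<n \<Longrightarrow> a i \<le> 2*\<epsilon>"
    "\<And>i. i < n \<Longrightarrow> G i \<le> G (Suc i)" "0 \<le> G 0" "G n \<le> 1" "0 \<le> \<epsilon>"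
  shows "\<bar>(\<Sum>i<n. q i) - (\<Sum>i<n. (G (Suc i) + G i) / 2 * a i)\<bar> \<le> \<epsilon>"
proof -
  have "\<bar>(\<Sum>i<n. q i) - (\<Sum>i<n. (G (Suc i) + G i) / 2 * a i)\<bar>
      = \<bar>\<Sum>i<n. q i - (G (Suc i) + G i) / 2 * a i\<bar>" by (simp add: sum_subtractf)
  also have "\<dots> \<le> (\<Sum>i<n. \<bar>q i - (G (Suc i) + G i) / 2 * a i\<bar>)" by (rule sum_abs)
  also have "\<dots> \<le> (\<Sum>i<n. \<epsilon> * (G (Suc i) - G i))"
  proof (rule sum_mono)
    fix i assume "i \<in> {..<n}"
    then have i: "i < n" by simp
    have e1: "(G (Suc i) + G i) / 2 * a i = (a i * G (Suc i) + a i * G i) / 2" by (simp add: algebra_simps)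
    have e2: "(G (Suc i) - G i) * (a i / 2) = (a i * G (Suc i) - a i * G i) / 2" by (simp add: algebra_simps)
    have h1: "\<bar>q i - (G (Suc i) + G i) / 2 * a i\<bar> \<le> (G (Suc i) - G i) * (a i / 2)"
      unfolding e1 e2 using mid_abs[OF assms(1,2)[OF i]] by simp
    have "(G (Suc i) - G i) * (a i / 2) \<le> (G (Suc i) - G i) * \<epsilon>"
      using assms(4,5)[OF i] by (intro mult_left_mono) auto
    then show "\<bar>q i - (G (Suc i) + G i) / 2 * a i\<bar> \<le> \<epsilon> * (G (Suc i) - G i)"
      using h1 by (simp add: mult.commute)
  qed
  also have "\<dots> = \<epsilon> * (G n - G 0)"
    by (simp add: sum_distrib_left[symmetric] sum_lessThan_telescope)
  also have "\<dots> \<le> \<epsilon> * 1"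
    using assms(6,7,8) by (intro mult_left_mono) auto
  finally show ?thesis by simp
qed

lemma aux_last0: "(ua::real) - ub + 2*w*z = 0 \<Longrightarrow> ub - (w*z) + x * (ua - ub + 2*w*z) = ua + (w*z)"
proof -
  assume h: "ua - ub + 2*w*z = 0"
  have "x * (ua - ub + 2*w*z) = 0" by (simp only: h mult_zero_right)
  then show ?thesis using h by (simp add: algebra_simps)
qed

lemma aux_last1: "(ub::real) - (w*z) + 1 * (ua - ub + 2*w*z) = ua + (w*z)" by (simp add: algebra_simps)

lemma aux_step: "((a::real) + ((i + 1) - 1)/(n - 2) * D) - (a + (i - 1)/(n - 2) * D) = D/(n - 2)"
proof -
  have "((i + 1) - 1)/(n - 2) * D - (i - 1)/(n - 2) * D = (((i + 1) - 1)/(n - 2) - (i - 1)/(n - 2)) * D"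
    by (rule left_diff_distrib[symmetric])
  also have "((i + 1) - 1)/(n - 2) - (i - 1)/(n - 2) = ((i + 1 - 1) - (i - 1))/(n - 2)"
    by (rule diff_divide_distrib[symmetric])
  also have "(i + 1 - 1) - (i - 1) = 1" by simp
  finally show ?thesis by simp
qed

lemma cover_lemma:
  fixes f :: "nat \<Rightarrow> ereal"
  assumes "f 0 = -\<infinity>" "ereal v \<le> f k"
  shows "\<exists>i<k. f i < ereal v \<and> ereal v \<le> f (Suc i)"
  using assms(2)
proof (induction k)
  case 0 then show ?case using assms(1) by simp
next
  case (Suc k)
  show ?case
  proof (cases "ereal v \<le> f k")
    case True then show ?thesis using Suc.IH by (meson less_SucI)
  next
    case False then show ?thesis using Suc.prems by (intro exI[of _ k]) auto
  qed
qed

lemma mono_disj: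
  fixes f :: "nat \<Rightarrow> ereal"
  assumes "\<And>i. f i \<le> f (Suc i)" "i < j" "f i < v" "v \<le> f (Suc i)" "f j < v"
  shows "v \<le> f (Suc j) \<Longrightarrow> False"
proof -
  have "mono f" using assms(1) by (simp add: mono_iff_le_Suc)
  then have "f (Suc i) \<le> f j" using assms(2) by (simp add: monoD)
  then show False using assms by auto
qed

context
  fixes X :: "'a set" and \<mu> \<sigma> :: "'a \<Rightarrow> real" and \<epsilon> :: real
  assumes fin: "finite X" and ne: "X \<noteq> {}" and sp: "\<forall>x\<in>X. \<sigma> x > 0"
    and e0: "0 < \<epsilon>" and e1: "\<epsilon> \<le> 1/4"
begin

abbreviation "tt \<equiv> eps_tilde \<epsilon>"
abbreviation "mM \<equiv> Max (\<mu> ` X)"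
abbreviation "mm \<equiv> Min (\<mu> ` X)"
abbreviation "sM \<equiv> Max (\<sigma> ` X)"
abbreviation "sm \<equiv> Min (\<sigma> ` X)"
abbreviation "DD \<equiv> mM - mm + 2 * tt * sM"
abbreviation "nn \<equiv> grid_n X \<mu> \<sigma> \<epsilon>"
abbreviation "ff \<equiv> grid_f X \<mu> \<sigma> \<epsilon>"
abbreviation "rr i \<equiv> mm - tt * sM + (real i - 1) / (real nn - 2) * DD"

lemma tt0: "0 \<le> tt" using eps_tilde(2)[OF e0 e1] .
lemma tt_Phi: "Phi (- tt) = 2 * \<epsilon>" using eps_tilde(1)[OF e0 e1] .

lemma sm_pos: "0 < sm" using fin ne sp by (subst Min_gr_iff) auto
lemma sig_le: "z \<in> X \<Longrightarrow> \<sigma> z \<le> sM" using fin by simp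
lemma sig_ge: "z \<in> X \<Longrightarrow> sm \<le> \<sigma> z" using fin by simp
lemma mu_le: "z \<in> X \<Longrightarrow> \<mu> z \<le> mM" using fin by simp
lemma mu_ge: "z \<in> X \<Longrightarrow> mm \<le> \<mu> z" using fin by simp
lemma sM_pos: "0 < sM" using sm_pos ne sig_le sig_ge by (meson ex_in_conv order_less_le_trans)
lemma mm_le_mM: "mm \<le> mM" using ne mu_le mu_ge by (meson ex_in_conv order_trans)

lemma DD0: "0 \<le> DD" using mm_le_mM tt0 sM_pos by simp

lemma nn_def2: "nn = nat \<lceil>DD / (2 * sqrt (2 * pi) * \<epsilon> * sm)\<rceil> + 2"
  by (simp add: grid_n_def)

lemma nn2: "2 \<le> nn" by (simp add: nn_def2)

lemma nn_eq2: "nn = 2 \<Longrightarrow> DD = 0"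
proof -
  assume "nn = 2"
  then have "\<lceil>DD / (2 * sqrt (2 * pi) * \<epsilon> * sm)\<rceil> \<le> 0" by (simp add: nn_def2)
  then have "DD / (2 * sqrt (2 * pi) * \<epsilon> * sm) \<le> 0" by simp
  moreover have "0 < 2 * sqrt (2 * pi) * \<epsilon> * sm" using e0 sm_pos by simp
  ultimately have "DD \<le> 0" by (simp add: divide_le_0_iff)
  then show "DD = 0" using DD0 by simp
qed

lemma nn_gt2: "2 < nn \<Longrightarrow> DD / (real nn - 2) \<le> 2 * sqrt (2 * pi) * \<epsilon> * sm"
proof -
  assume n: "2 < nn"
  have K: "0 < 2 * sqrt (2 * pi) * \<epsilon> * sm" using e0 sm_pos by simp
  have "DD / (2 * sqrt (2 * pi) * \<epsilon> * sm) \<le> real nn - 2"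
    unfolding nn_def2 by (simp add: real_nat_ceiling_ge)
  moreover have "0 < real nn - 2" using n by simp
  ultimately have "DD \<le> (real nn - 2) * (2 * sqrt (2 * pi) * \<epsilon> * sm)"
    using K by (simp add: pos_divide_le_eq)
  then show ?thesis using \<open>0 < real nn - 2\<close> by (simp add: pos_divide_le_eq mult.commute)
qed

lemma ff0: "ff 0 = -\<infinity>" by (simp add: grid_f_def)
lemma ffn: "nn \<le> i \<Longrightarrow> ff i = \<infinity>" using nn2 by (simp add: grid_f_def)
lemma ffi: "0 < i \<Longrightarrow> i < nn \<Longrightarrow> ff i = ereal (rr i)" by (simp add: grid_f_def)

lemma rr_mono: "i \<le> j \<Longrightarrow> rr i \<le> rr j"
proof -
  assume "i \<le> j"
  have "(real i - 1) / (real nn - 2) \<le> (real j - 1) / (real nn - 2)"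
    using \<open>i \<le> j\<close> nn2 by (intro divide_right_mono) auto
  then have "(real i - 1) / (real nn - 2) * DD \<le> (real j - 1) / (real nn - 2) * DD"
    using DD0 by (rule mult_right_mono)
  then show ?thesis by linarith
qed

lemma ff_mono: "ff i \<le> ff (Suc i)"
proof -
  consider "i = 0" | "nn \<le> Suc i" | "0 < i" "Suc i < nn" by linarith
  then show ?thesis
  proof cases
    case 1 then show ?thesis by (simp add: ff0)
  next
    case 2 then show ?thesis by (simp add: ffn)
  next
    case 3
    then have "ff i = ereal (rr i)" "ff (Suc i) = ereal (rr (Suc i))" using ffi by auto
    then show ?thesis using rr_mono[of i "Suc i"] by simp
  qed
qed

lemma rr1: "rr 1 = mm - tt * sM" by simp

lemma rr_last: "rr (nn - 1) = mM + tt * sM"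
proof (cases "nn = 2")
  case True
  show ?thesis by (rule aux_last0[OF nn_eq2[OF True]])
next
  case False
  then have n3: "3 \<le> nn" using nn2 by simp
  then have "real (nn - 1) = real nn - 1" by (simp add: of_nat_diff)
  then have "real (nn - 1) - 1 = real nn - 2" by simp
  moreover have "real nn - 2 \<noteq> 0" using n3 by simp
  ultimately have h: "(real (nn - 1) - 1) / (real nn - 2) = 1" by simp
  show ?thesis unfolding h by (rule aux_last1)
qed

lemma rr_step: "rr (Suc i) - rr i = DD / (real nn - 2)"
proof -
  have "real (Suc i) = real i + 1" by simp
  then show ?thesis by (simp only: aux_step)
qed

end



lemma ereal_le_set: "{r::real. ereal r \<le> c} \<in> sets borel"
proof (cases c)
  case (real r) then show ?thesis by simp
next
  case PInf then show ?thesis by simp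
next
  case MInf then show ?thesis by simp
qed

lemma ereal_gt_set: "{r::real. c < ereal r} \<in> sets borel"
proof (cases c)
  case (real r) then show ?thesis by simp
next
  case PInf then show ?thesis by simp
next
  case MInf then show ?thesis by simp
qed

lemma ereal_Ioc_set: "{r::real. c < ereal r \<and> ereal r \<le> d} \<in> sets borel"
proof -
  have "{r::real. c < ereal r \<and> ereal r \<le> d} = {r. c < ereal r} \<inter> {r. ereal r \<le> d}" by auto
  then show ?thesis using ereal_gt_set ereal_le_set by simp
qed

lemma aux_div: "((a::real) - m) / s - (b - m) / s = (a - b) / s"
  by (simp add: diff_divide_distrib[symmetric])

context
  fixes M :: "'b measure" and X :: "'a set" and \<mu> \<sigma> :: "'a \<Rightarrow> real"
    and F :: "'a \<Rightarrow> 'b \<Rightarrow> real" and \<epsilon> :: real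
  assumes P: "prob_space M"
    and fin: "finite X" and ne: "X \<noteq> {}"
    and sp: "\<forall>x\<in>X. \<sigma> x > 0"
    and dist: "\<forall>x\<in>X. distributed M lborel (F x) (\<lambda>t. ennreal (normal_density (\<mu> x) (\<sigma> x) t))"
    and ind: "prob_space.indep_vars M (\<lambda>_. borel) F X"
    and e0: "0 < \<epsilon>" and e1: "\<epsilon> \<le> 1/4"
begin

interpretation M: prob_space M by (rule P)

lemma Fm: "z \<in> X \<Longrightarrow> F z \<in> borel_measurable M"
  using distributed_measurable[OF dist[rule_format]] by simp

lemma Bev: "z \<in> X \<Longrightarrow> {\<omega>\<in>space M. ereal (F z \<omega>) \<le> c} \<in> M.events"
proof -
  assume z: "z \<in> X"
  have "{\<omega>\<in>space M. ereal (F z \<omega>) \<le> c} = F z -` {r. ereal r \<le> c} \<inter> space M" by auto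
  then show ?thesis using measurable_sets[OF Fm[OF z] ereal_le_set] by simp
qed

lemma preev: "z \<in> X \<Longrightarrow> S \<in> sets borel \<Longrightarrow> F z -` S \<inter> space M \<in> M.events"
  using measurable_sets[OF Fm] by simp

lemma indep_prod:
  assumes x: "x \<in> X" and S: "S \<in> sets borel"
  shows "M.prob ((F x -` S \<inter> space M) \<inter> (\<Inter>z\<in>X-{x}. {\<omega>\<in>space M. ereal (F z \<omega>) \<le> c}))
       = M.prob (F x -` S \<inter> space M) * g_fun M F X x c"
proof -
  define A where "A j = (if j = x then F x -` S \<inter> space M else F j -` {r. ereal r \<le> c} \<inter> space M)" for j
  have I: "M.indep_sets (\<lambda>i. {F i -` A \<inter> space M | A. A \<in> sets borel}) X"
    using ind unfolding M.indep_vars_def2 by simp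
  have mem: "\<forall>j\<in>X. A j \<in> {F j -` A \<inter> space M | A. A \<in> sets borel}"
  proof
    fix j assume "j \<in> X"
    show "A j \<in> {F j -` A \<inter> space M | A. A \<in> sets borel}"
    proof (cases "j = x")
      case True
      then have "A j = F j -` S \<inter> space M" by (simp add: A_def)
      then show ?thesis using S by blast
    next
      case False
      then have "A j = F j -` {r. ereal r \<le> c} \<inter> space M" by (simp add: A_def)
      then show ?thesis using ereal_le_set by blast
    qed
  qed
  have "M.prob (\<Inter>j\<in>X. A j) = (\<Prod>j\<in>X. M.prob (A j))"
    using x fin mem by (intro M.indep_setsD[OF I]) auto
  moreover have "(\<Inter>j\<in>X. A j) = (F x -` S \<inter> space M) \<inter> (\<Inter>z\<in>X-{x}. {\<omega>\<in>space M. ereal (F z \<omega>) \<le> c})"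
    using x by (auto simp: A_def)
  moreover have "(\<Prod>j\<in>X. M.prob (A j)) = M.prob (A x) * (\<Prod>j\<in>X-{x}. M.prob (A j))"
    using x fin by (simp add: prod.remove)
  moreover have "(\<Prod>j\<in>X-{x}. M.prob (A j)) = g_fun M F X x c"
    unfolding g_fun_def by (intro prod.cong) (auto simp: A_def intro!: arg_cong[where f="M.prob"])
  ultimately show ?thesis by (simp add: A_def)
qed

lemma g_mono: "c \<le> d \<Longrightarrow> g_fun M F X x c \<le> g_fun M F X x d"
  unfolding g_fun_def
  by (intro prod_mono conjI M.finite_measure_mono Bev) (auto intro: order_trans)

lemma g_nonneg: "0 \<le> g_fun M F X x c"
  unfolding g_fun_def by (intro prod_nonneg) auto

lemma g_le1: "g_fun M F X x c \<le> 1"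
  unfolding g_fun_def by (intro prod_le_1) auto


abbreviation "dtt \<equiv> eps_tilde \<epsilon>"
abbreviation "dmM \<equiv> Max (\<mu> ` X)"
abbreviation "dmm \<equiv> Min (\<mu> ` X)"
abbreviation "dsM \<equiv> Max (\<sigma> ` X)"
abbreviation "dsm \<equiv> Min (\<sigma> ` X)"
abbreviation "dDD \<equiv> dmM - dmm + 2 * dtt * dsM"
abbreviation "dnn \<equiv> grid_n X \<mu> \<sigma> \<epsilon>"
abbreviation "dff \<equiv> grid_f X \<mu> \<sigma> \<epsilon>"
abbreviation "drr i \<equiv> dmm - dtt * dsM + (real i - 1) / (real dnn - 2) * dDD"

lemmas H = tt0[OF fin ne sp e0 e1] tt_Phi[OF fin ne sp e0 e1] sm_pos[OF fin ne sp e0 e1]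
  sig_le[OF fin ne sp e0 e1] sig_ge[OF fin ne sp e0 e1] mu_le[OF fin ne sp e0 e1, where \<mu>=\<mu>] mu_ge[OF fin ne sp e0 e1, where \<mu>=\<mu>]
  sM_pos[OF fin ne sp e0 e1] DD0[OF fin ne sp e0 e1, where \<mu>=\<mu>] nn2[OF fin ne sp e0 e1, where \<mu>=\<mu>] nn_gt2[OF fin ne sp e0 e1, where \<mu>=\<mu>]
  ff0[OF fin ne sp e0 e1, where \<mu>=\<mu>] ffn[OF fin ne sp e0 e1, where \<mu>=\<mu>] ffi[OF fin ne sp e0 e1, where \<mu>=\<mu>] ff_mono[OF fin ne sp e0 e1, where \<mu>=\<mu>]
  rr_last[OF fin ne sp e0 e1, where \<mu>=\<mu>] rr_step[OF fin ne sp e0 e1, where \<mu>=\<mu>]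

lemma a_bound:
  assumes x: "x \<in> X" and i: "i < dnn"
  shows "M.prob {\<omega>\<in>space M. dff i < ereal (F x \<omega>) \<and> ereal (F x \<omega>) \<le> dff (Suc i)} \<le> 2 * \<epsilon>"
proof -
  have sx: "0 < \<sigma> x" using sp x by auto
  note D = dist[rule_format, OF x]
  note tt0 = H(1) and ttP = H(2)
  have sxM: "\<sigma> x \<le> dsM" using H(4)[OF x] .
  have tts: "dtt * \<sigma> x \<le> dtt * dsM" by (rule mult_left_mono[OF sxM tt0])
  consider "i = 0" | "i = dnn - 1" "i \<noteq> 0" | "0 < i" "Suc i < dnn" using i by linarith
  then show ?thesis
  proof cases
    case 1
    have "1 < dnn" using H(10) by simp
    then have "dff (Suc i) = ereal (drr 1)" using 1 H(14)[of 1] by simp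
    then have "{\<omega>\<in>space M. dff i < ereal (F x \<omega>) \<and> ereal (F x \<omega>) \<le> dff (Suc i)} = {\<omega>\<in>space M. F x \<omega> \<le> drr 1}"
      using 1 H(12) by auto
    then have "M.prob {\<omega>\<in>space M. dff i < ereal (F x \<omega>) \<and> ereal (F x \<omega>) \<le> dff (Suc i)} = Phi ((drr 1 - \<mu> x) / \<sigma> x)"
      using normal_le[OF P sx D] by simp
    also have "\<dots> \<le> Phi (- dtt)"
    proof (rule Phi_mono)
      have "drr 1 - \<mu> x \<le> - dtt * \<sigma> x" using H(7)[OF x] tts by simp
      then show "(drr 1 - \<mu> x) / \<sigma> x \<le> - dtt" using sx by (simp add: pos_divide_le_eq)
    qed
    finally show ?thesis using ttP by simp
  next
    case 2
    have "dff (Suc i) = \<infinity>" using 2 H(13) by simp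
    moreover have "dff i = ereal (drr (dnn - 1))" using 2 H(14)[of i] i by simp
    ultimately have "{\<omega>\<in>space M. dff i < ereal (F x \<omega>) \<and> ereal (F x \<omega>) \<le> dff (Suc i)} = {\<omega>\<in>space M. drr (dnn - 1) < F x \<omega>}"
      by auto
    then have "M.prob {\<omega>\<in>space M. dff i < ereal (F x \<omega>) \<and> ereal (F x \<omega>) \<le> dff (Suc i)} = Phi (- ((drr (dnn - 1) - \<mu> x) / \<sigma> x))"
      using normal_gt[OF P sx D] by simp
    also have "\<dots> \<le> Phi (- dtt)"
    proof (rule Phi_mono)
      have "dtt * \<sigma> x \<le> drr (dnn - 1) - \<mu> x" using H(6)[OF x] tts H(16) by simp
      then have "dtt \<le> (drr (dnn - 1) - \<mu> x) / \<sigma> x" using sx by (simp add: pos_le_divide_eq)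
      then show "- ((drr (dnn - 1) - \<mu> x) / \<sigma> x) \<le> - dtt" by simp
    qed
    finally show ?thesis using ttP by simp
  next
    case 3
    have fi: "dff i = ereal (drr i)" using 3 H(14)[of i] by simp
    have fs: "dff (Suc i) = ereal (drr (Suc i))" using 3 H(14)[of "Suc i"] by simp
    have le: "drr i \<le> drr (Suc i)" using H(15)[of i] fi fs by simp
    have n2: "2 < dnn" using 3 by simp
    have "{\<omega>\<in>space M. dff i < ereal (F x \<omega>) \<and> ereal (F x \<omega>) \<le> dff (Suc i)} = {\<omega>\<in>space M. drr i < F x \<omega> \<and> F x \<omega> \<le> drr (Suc i)}"
      using fi fs by auto
    then have "M.prob {\<omega>\<in>space M. dff i < ereal (F x \<omega>) \<and> ereal (F x \<omega>) \<le> dff (Suc i)}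
       = Phi ((drr (Suc i) - \<mu> x) / \<sigma> x) - Phi ((drr i - \<mu> x) / \<sigma> x)"
      using normal_Ioc[OF P sx D le] by simp
    also have "\<dots> \<le> \<bar>(drr (Suc i) - \<mu> x) / \<sigma> x - (drr i - \<mu> x) / \<sigma> x\<bar> / sqrt (2 * pi)"
      using Phi_lipschitz by (rule abs_le_D1)
    also have "(drr (Suc i) - \<mu> x) / \<sigma> x - (drr i - \<mu> x) / \<sigma> x = (dDD / (real dnn - 2)) / \<sigma> x"
      unfolding aux_div H(17)[of i] ..
    also have "\<bar>(dDD / (real dnn - 2)) / \<sigma> x\<bar> = (dDD / (real dnn - 2)) / \<sigma> x"
      using H(9) n2 sx by simp
    also have "(dDD / (real dnn - 2)) / \<sigma> x / sqrt (2 * pi) \<le> (2 * sqrt (2 * pi) * \<epsilon> * dsm) / \<sigma> x / sqrt (2 * pi)"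
      using H(11)[OF n2] sx by (intro divide_right_mono) auto
    also have "\<dots> = 2 * \<epsilon> * (dsm / \<sigma> x)" by simp
    also have "\<dots> \<le> 2 * \<epsilon> * 1"
      using H(5)[OF x] sx e0 by (intro mult_left_mono) auto
    finally show ?thesis by simp
  qed
qed


lemma part1:
  assumes x: "x \<in> X"
  shows "\<bar>p_tilde M F X x - (\<Sum>i<dnn. (g_fun M F X x (dff (Suc i)) + g_fun M F X x (dff i)) / 2
            * measure M {\<omega>\<in>space M. dff i < ereal (F x \<omega>) \<and> ereal (F x \<omega>) \<le> dff (Suc i)})\<bar> \<le> \<epsilon>"
proof -
  define S where "S i = {r. dff i < ereal r \<and> ereal r \<le> dff (Suc i)}" for i
  define A where "A i = {\<omega>\<in>space M. dff i < ereal (F x \<omega>) \<and> ereal (F x \<omega>) \<le> dff (Suc i)}" for i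
  define E where "E = {\<omega>\<in>space M. \<forall>z\<in>X-{x}. F z \<omega> \<le> F x \<omega>}"
  define G where "G i = g_fun M F X x (dff i)" for i
  define B where "B c = {\<omega>\<in>space M. \<forall>z\<in>X-{x}. ereal (F z \<omega>) \<le> c}" for c
  define q where "q i = M.prob (E \<inter> A i)" for i
  define a where "a i = M.prob (A i)" for i
  have Sb: "S i \<in> sets borel" for i unfolding S_def by (rule ereal_Ioc_set)
  have Aeq: "A i = F x -` S i \<inter> space M" for i by (auto simp: A_def S_def)
  have Aev: "A i \<in> M.events" for i using preev[OF x Sb] Aeq by simp
  have Eev: "E \<in> M.events"
    unfolding E_def
  proof (rule sets.sets_Collect_finite_All)
    fix z assume "z \<in> X - {x}"
    then show "{\<omega>\<in>space M. F z \<omega> \<le> F x \<omega>} \<in> sets M"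
      using Fm[of z] Fm[OF x] by (intro borel_measurable_le) auto
  qed (use fin in simp)
  have Bev: "B c \<in> M.events" for c
    unfolding B_def
  proof (rule sets.sets_Collect_finite_All)
    fix z assume "z \<in> X - {x}"
    then show "{\<omega>\<in>space M. ereal (F z \<omega>) \<le> c} \<in> sets M" using Bev by auto
  qed (use fin in simp)
  have AB: "A i \<inter> B c = (F x -` S i \<inter> space M) \<inter> (\<Inter>z\<in>X-{x}. {\<omega>\<in>space M. ereal (F z \<omega>) \<le> c})" for i c
    unfolding Aeq B_def by auto
  have ABp: "M.prob (A i \<inter> B c) = a i * g_fun M F X x c" for i c
  proof -
    have "M.prob (A i \<inter> B c) = M.prob ((F x -` S i \<inter> space M) \<inter> (\<Inter>z\<in>X-{x}. {\<omega>\<in>space M. ereal (F z \<omega>) \<le> c}))"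
      by (simp only: AB)
    also have "\<dots> = M.prob (F x -` S i \<inter> space M) * g_fun M F X x c" by (rule indep_prod[OF x Sb])
    also have "M.prob (F x -` S i \<inter> space M) = a i" by (simp only: a_def Aeq)
    finally show ?thesis .
  qed
  have Ecov: "E = (\<Union>i\<in>{..<dnn}. E \<inter> A i)"
  proof
    show "E \<subseteq> (\<Union>i\<in>{..<dnn}. E \<inter> A i)"
    proof
      fix \<omega> assume w: "\<omega> \<in> E"
      have "ereal (F x \<omega>) \<le> dff dnn" using H(13)[of dnn] by simp
      then obtain i where "i < dnn" "dff i < ereal (F x \<omega>)" "ereal (F x \<omega>) \<le> dff (Suc i)"
        using cover_lemma[of dff "F x \<omega>" dnn] H(12) by auto
      then show "\<omega> \<in> (\<Union>i\<in>{..<dnn}. E \<inter> A i)" using w by (auto simp: A_def E_def)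
    qed
  qed auto
  have disj: "disjoint_family_on (\<lambda>i. E \<inter> A i) {..<dnn}"
    unfolding disjoint_family_on_def
  proof (intro ballI impI)
    fix i j assume "i \<in> {..<dnn}" "j \<in> {..<dnn}" "i \<noteq> j"
    show "E \<inter> A i \<inter> (E \<inter> A j) = {}"
    proof (rule ccontr)
      assume "E \<inter> A i \<inter> (E \<inter> A j) \<noteq> {}"
      then obtain \<omega> where "\<omega> \<in> A i" "\<omega> \<in> A j" by blast
      then have h: "dff i < ereal (F x \<omega>)" "ereal (F x \<omega>) \<le> dff (Suc i)"
                   "dff j < ereal (F x \<omega>)" "ereal (F x \<omega>) \<le> dff (Suc j)" by (auto simp: A_def)
      consider "i < j" | "j < i" using \<open>i \<noteq> j\<close> by linarith
      then show False
      proof cases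
        case 1 then show False using mono_disj[of dff i j "ereal (F x \<omega>)"] H(15) h by blast
      next
        case 2 then show False using mono_disj[of dff j i "ereal (F x \<omega>)"] H(15) h by blast
      qed
    qed
  qed
  have pE: "p_tilde M F X x = (\<Sum>i<dnn. q i)"
  proof -
    have "p_tilde M F X x = M.prob E" by (simp add: p_tilde_def E_def)
    also have "\<dots> = M.prob (\<Union>i\<in>{..<dnn}. E \<inter> A i)" using Ecov by simp
    also have "\<dots> = (\<Sum>i<dnn. M.prob (E \<inter> A i))"
      using Eev Aev disj by (intro M.finite_measure_finite_Union) auto
    finally show ?thesis by (simp add: q_def)
  qed
  have lo: "a i * G i \<le> q i" for i
  proof -
    have "A i \<inter> B (dff i) \<subseteq> E \<inter> A i"
    proof
      fix \<omega> assume "\<omega> \<in> A i \<inter> B (dff i)"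
      then have "\<omega> \<in> space M" "dff i < ereal (F x \<omega>)" "\<forall>z\<in>X-{x}. ereal (F z \<omega>) \<le> dff i"
        by (auto simp: A_def B_def)
      then have "\<forall>z\<in>X-{x}. F z \<omega> \<le> F x \<omega>"
      proof (intro ballI)
        fix z assume "z \<in> X - {x}"
        then have "ereal (F z \<omega>) \<le> dff i" using \<open>\<forall>z\<in>X-{x}. ereal (F z \<omega>) \<le> dff i\<close> by blast
        then have "ereal (F z \<omega>) < ereal (F x \<omega>)" using \<open>dff i < ereal (F x \<omega>)\<close> by (rule le_less_trans)
        then show "F z \<omega> \<le> F x \<omega>" by simp
      qed
      then show "\<omega> \<in> E \<inter> A i" using \<open>\<omega> \<in> A i \<inter> B (dff i)\<close> by (auto simp: E_def A_def)
    qed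
    then have "M.prob (A i \<inter> B (dff i)) \<le> M.prob (E \<inter> A i)"
      using Eev Aev by (intro M.finite_measure_mono) auto
    then show ?thesis using ABp[of i "dff i"] by (simp add: q_def G_def)
  qed
  have up: "q i \<le> a i * G (Suc i)" for i
  proof -
    have "E \<inter> A i \<subseteq> A i \<inter> B (dff (Suc i))"
    proof
      fix \<omega> assume "\<omega> \<in> E \<inter> A i"
      then have "\<omega> \<in> space M" "ereal (F x \<omega>) \<le> dff (Suc i)" "\<forall>z\<in>X-{x}. F z \<omega> \<le> F x \<omega>"
        by (auto simp: A_def E_def)
      then have "\<forall>z\<in>X-{x}. ereal (F z \<omega>) \<le> dff (Suc i)"
      proof (intro ballI)
        fix z assume "z \<in> X - {x}"
        then have "F z \<omega> \<le> F x \<omega>" using \<open>\<forall>z\<in>X-{x}. F z \<omega> \<le> F x \<omega>\<close> by blast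
        then have "ereal (F z \<omega>) \<le> ereal (F x \<omega>)" by simp
        then show "ereal (F z \<omega>) \<le> dff (Suc i)" using \<open>ereal (F x \<omega>) \<le> dff (Suc i)\<close> by (rule order_trans)
      qed
      then show "\<omega> \<in> A i \<inter> B (dff (Suc i))" using \<open>\<omega> \<in> E \<inter> A i\<close> by (auto simp: B_def A_def)
    qed
    then have "M.prob (E \<inter> A i) \<le> M.prob (A i \<inter> B (dff (Suc i)))"
      using Bev Aev by (intro M.finite_measure_mono) auto
    then show ?thesis using ABp[of i "dff (Suc i)"] by (simp add: q_def G_def)
  qed
  have "\<bar>(\<Sum>i<dnn. q i) - (\<Sum>i<dnn. (G (Suc i) + G i) / 2 * a i)\<bar> \<le> \<epsilon>"
  proof (rule sum_bound)
    fix i assume i: "i < dnn"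
    show "a i * G i \<le> q i" by (rule lo)
    show "q i \<le> a i * G (Suc i)" by (rule up)
    show "0 \<le> a i" by (simp add: a_def)
    show "a i \<le> 2 * \<epsilon>" unfolding a_def A_def using a_bound[OF x i] .
    show "G i \<le> G (Suc i)" unfolding G_def using H(15) by (rule g_mono)
  next
    show "0 \<le> G 0" unfolding G_def by (rule g_nonneg)
    show "G dnn \<le> 1" unfolding G_def by (rule g_le1)
    show "0 \<le> \<epsilon>" using e0 by simp
  qed
  then show ?thesis unfolding pE G_def a_def A_def .
qed

end



lemma exp4: "9 \<le> exp (4::real)"
proof -
  have "3 \<le> exp (2::real)" using exp_ge_add_one_self[of 2] by simp
  then have "3 * 3 \<le> exp (2::real) * exp 2" by (intro mult_mono) auto
  also have "exp (2::real) * exp 2 = exp 4" by (simp add: exp_add[symmetric])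
  finally show ?thesis by simp
qed

lemma ln6: "ln (6::real) \<le> 4"
proof -
  have "ln (6::real) \<le> ln (exp 4)" using exp4 by (subst ln_le_cancel_iff) auto
  then show ?thesis by simp
qed

lemma sqrt2pi: "sqrt (2 * pi) \<le> 3"
proof -
  have "2 * pi \<le> 9" using pi_less_4 by simp
  then have "sqrt (2 * pi) \<le> sqrt 9" by (rule real_sqrt_le_mono)
  then show ?thesis by simp
qed

lemma t_bounds:
  fixes e :: real
  assumes e0: "0 < e" and e8: "e \<le> exp (-8)"
  shows "sqrt (ln (1/e)) / 2 \<le> eps_tilde e" "eps_tilde e \<le> sqrt 2 * sqrt (ln (1/e))"
    "4 \<le> ln (1/e)" "e \<le> 1/4"
proof -
  have "exp (-8::real) \<le> exp (-4)" by simp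
  also have "exp (-4::real) = 1 / exp 4" by (simp add: exp_minus field_simps)
  also have "\<dots> \<le> 1/4" using exp4 by (simp add: divide_le_eq)
  finally show e4: "e \<le> 1/4" using e8 by simp
  define t where "t = eps_tilde e"
  define L where "L = ln (1/e)"
  have t0: "0 \<le> t" and tP: "Phi (-t) = 2 * e" using eps_tilde[OF e0 e4] by (auto simp: t_def)
  have lne: "ln e \<le> -8" using e8 e0 by (metis ln_exp ln_le_cancel_iff exp_gt_zero)
  have L: "L = - ln e" using e0 by (simp add: L_def ln_div)
  have L8: "8 \<le> L" using lne L by simp
  then show "4 \<le> ln (1/e)" by (simp add: L_def)
  have "2 * e \<le> exp (- t\<^sup>2 / 2) / 2" using Phi_tail[OF t0] tP by simp
  then have "4 * e \<le> exp (- t\<^sup>2 / 2)" by simp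
  then have "ln (4 * e) \<le> ln (exp (- t\<^sup>2 / 2))" using e0 by (subst ln_le_cancel_iff) auto
  then have "ln 4 + ln e \<le> - t\<^sup>2 / 2" using e0 by (simp add: ln_mult)
  moreover have "0 \<le> ln (4::real)" by simp
  ultimately have "t\<^sup>2 \<le> 2 * L" using L by linarith
  then have "t \<le> sqrt (2 * L)" by (rule real_le_rsqrt)
  then show "eps_tilde e \<le> sqrt 2 * sqrt (ln (1/e))" by (simp add: t_def L_def real_sqrt_mult)
  have a1: "(-t - (-t - 1)) * std_normal_density (max \<bar>-t-1\<bar> \<bar>-t\<bar>) \<le> measure stdN {-t-1<..-t}"
    by (rule stdN_Ioc_lower) simp
  have a2: "max \<bar>-t-1\<bar> \<bar>-t\<bar> = t + 1" using t0 by simp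
  have a3: "measure stdN {-t-1<..-t} = Phi (-t) - Phi (-t-1)" using Phi_diff[of "-t-1" "-t"] by simp
  have a4: "0 \<le> Phi (-t-1)" by (simp add: Phi_def2)
  have "std_normal_density (t + 1) \<le> Phi (-t) - Phi (-t-1)" using a1 unfolding a2 a3 by simp
  then have "std_normal_density (t + 1) \<le> 2 * e" using tP a4 by linarith
  then have "exp (- (t + 1)\<^sup>2 / 2) \<le> 2 * e * sqrt (2 * pi)"
    by (simp add: std_normal_density_def field_simps)
  also have "\<dots> \<le> 2 * e * 3" using sqrt2pi e0 by (intro mult_left_mono) auto
  finally have "exp (- (t + 1)\<^sup>2 / 2) \<le> 6 * e" by simp
  then have "ln (exp (- (t + 1)\<^sup>2 / 2)) \<le> ln (6 * e)" using e0 by (subst ln_le_cancel_iff) auto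
  then have "- (t + 1)\<^sup>2 / 2 \<le> ln 6 + ln e" using e0 by (simp add: ln_mult)
  then have "L \<le> (t + 1)\<^sup>2" using ln6 L L8 by linarith
  then have "sqrt L \<le> t + 1" using t0 by (intro real_le_lsqrt) auto
  moreover have "2 \<le> sqrt L"
  proof -
    have "sqrt 4 \<le> sqrt L" using L8 by (intro real_sqrt_le_mono) simp
    then show ?thesis by simp
  qed
  ultimately have "sqrt L / 2 \<le> t" by linarith
  then show "sqrt (ln (1/e)) / 2 \<le> eps_tilde e" by (simp add: t_def L_def)
qed


lemma part2:
  fixes X :: "'a set" and \<mu> \<sigma> :: "'a \<Rightarrow> real"
  assumes fin: "finite X" and ne: "X \<noteq> {}" and sp: "\<forall>x\<in>X. \<sigma> x > 0"
  shows "(\<lambda>e. real (grid_n X \<mu> \<sigma> e)) \<in> \<Theta>[at_right 0](\<lambda>e. sqrt (ln (1 / e)) / e)"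
proof -
  define A where "A = Max (\<mu> ` X) - Min (\<mu> ` X)"
  define S where "S = Max (\<sigma> ` X)"
  define s where "s = Min (\<sigma> ` X)"
  define K where "K = 2 * sqrt (2 * pi) * s"
  have s0: "0 < s" unfolding s_def using fin ne sp by (subst Min_gr_iff) auto
  obtain x0 where x0: "x0 \<in> X" using ne by auto
  have "s \<le> \<sigma> x0" "\<sigma> x0 \<le> S" using fin x0 by (auto simp: s_def S_def)
  then have S0: "0 < S" using s0 by linarith
  have "Min (\<mu> ` X) \<le> \<mu> x0" "\<mu> x0 \<le> Max (\<mu> ` X)" using fin x0 by auto
  then have A0: "0 \<le> A" unfolding A_def by linarith
  have K0: "0 < K" using s0 by (simp add: K_def)
  define c1 where "c1 = S / K"
  define c2 where "c2 = A / K + 2 * sqrt 2 * S / K + 3"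
  have c1: "0 < c1" using S0 K0 by (simp add: c1_def)
  have "0 \<le> A / K" "0 \<le> 2 * sqrt 2 * S / K" using S0 K0 A0 by simp_all
  then have c2: "0 < c2" unfolding c2_def by linarith
  show ?thesis
  proof (rule bigthetaI'[OF c1 c2])
    show "\<forall>\<^sub>F y in at_right 0. c1 * norm (sqrt (ln (1 / y)) / y) \<le> norm (real (grid_n X \<mu> \<sigma> y))
            \<and> norm (real (grid_n X \<mu> \<sigma> y)) \<le> c2 * norm (sqrt (ln (1 / y)) / y)"
      unfolding eventually_at_right_field
    proof (intro exI[of _ "exp (-8)"] conjI allI impI)
      show "(0::real) < exp (-8)" by simp
      fix y :: real assume y0: "0 < y" and y8: "y < exp (-8)"
      note tb = t_bounds[OF y0 less_imp_le[OF y8]]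
      define t where "t = eps_tilde y"
      define L where "L = ln (1 / y)"
      have t0: "0 \<le> t" using eps_tilde(2)[OF y0 tb(4)] by (simp add: t_def)
      have tl: "sqrt L / 2 \<le> t" "t \<le> sqrt 2 * sqrt L" using tb(1,2) by (simp_all add: t_def L_def)
      have L1: "1 \<le> sqrt L" using tb(3) by (simp add: L_def)
      have y1: "y \<le> 1" using tb(4) by simp
      define Dn where "Dn = K * y"
      have Dn0: "0 < Dn" using K0 y0 by (simp add: Dn_def)
      define q where "q = (A + 2 * t * S) / Dn"
      have deq: "2 * sqrt (2 * pi) * y * Min (\<sigma> ` X) = Dn"
        by (simp add: Dn_def K_def s_def mult.commute mult.left_commute)
      have gn: "grid_n X \<mu> \<sigma> y = nat \<lceil>q\<rceil> + 2"
        unfolding grid_n_def unfolding deq by (simp only: q_def A_def S_def t_def)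
      have q0: "0 \<le> q" using A0 t0 S0 Dn0 by (simp add: q_def)
      have qn1: "q \<le> real (nat \<lceil>q\<rceil>)" by (simp add: real_nat_ceiling_ge)
      have qn2: "real (nat \<lceil>q\<rceil>) \<le> q + 1" using q0 by linarith
      have "0 \<le> L" using tb(3) by (simp add: L_def)
      then have g0: "0 \<le> sqrt L / y" using y0 by simp
      have nrm: "norm (sqrt (ln (1 / y)) / y) = sqrt L / y"
        unfolding real_norm_def L_def using abs_of_nonneg[OF g0[unfolded L_def]] .
      have nrm2: "norm (real (grid_n X \<mu> \<sigma> y)) = real (nat \<lceil>q\<rceil>) + 2" by (simp add: gn)
      have c1g: "c1 * (sqrt L / y) = S * sqrt L / Dn" by (simp only: c1_def Dn_def times_divide_times_eq)
      have e1: "A / K * (sqrt L / y) = A * sqrt L / Dn" unfolding Dn_def by (rule times_divide_times_eq)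
      have e2: "2 * sqrt 2 * S / K * (sqrt L / y) = 2 * sqrt 2 * S * sqrt L / Dn" unfolding Dn_def by (rule times_divide_times_eq)
      have e3: "3 * (sqrt L / y) = 3 * sqrt L / y" by (rule times_divide_eq_right)
      have c2g: "c2 * (sqrt L / y) = A * sqrt L / Dn + 2 * sqrt 2 * S * sqrt L / Dn + 3 * sqrt L / y"
        unfolding c2_def distrib_right e1 e2 e3 ..
      have low: "S * sqrt L \<le> A + 2 * t * S"
      proof -
        have "S * sqrt L \<le> S * (2 * t)" using tl(1) S0 by (intro mult_left_mono) auto
        then show ?thesis using A0 by (simp add: mult_ac)
      qed
      have "c1 * (sqrt L / y) \<le> q" unfolding c1g q_def using low Dn0 by (intro divide_right_mono) auto
      then show "c1 * norm (sqrt (ln (1 / y)) / y) \<le> norm (real (grid_n X \<mu> \<sigma> y))"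
        unfolding nrm nrm2 using qn1 by linarith
      have u1: "A / Dn \<le> A * sqrt L / Dn" using A0 L1 Dn0 by (intro divide_right_mono) (auto simp: mult_le_cancel_left1)
      have u2: "2 * t * S / Dn \<le> 2 * sqrt 2 * S * sqrt L / Dn"
      proof (intro divide_right_mono)
        have "2 * S * t \<le> 2 * S * (sqrt 2 * sqrt L)" using tl(2) S0 by (intro mult_left_mono) auto
        then show "2 * t * S \<le> 2 * sqrt 2 * S * sqrt L" by (simp add: mult_ac)
      qed (use Dn0 in simp)
      have u3: "3 \<le> 3 * sqrt L / y"
      proof -
        have "3 * y \<le> 3 * sqrt L" using y1 L1 by linarith
        then show ?thesis using y0 by (simp add: le_divide_eq)
      qed
      have qs: "q = A / Dn + 2 * t * S / Dn" by (simp add: q_def add_divide_distrib)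
      show "norm (real (grid_n X \<mu> \<sigma> y)) \<le> c2 * norm (sqrt (ln (1 / y)) / y)"
        unfolding nrm nrm2 c2g using qn2 qs u1 u2 u3 by linarith
    qed
  qed
qed

theorem proposition1:
  fixes M :: "'b measure" and X :: "'a set" and \<mu> \<sigma> :: "'a \<Rightarrow> real"
    and F :: "'a \<Rightarrow> 'b \<Rightarrow> real" and \<epsilon> :: real
  assumes "prob_space M"
    and "finite X" and "X \<noteq> {}"
    and "\<forall>x\<in>X. \<sigma> x > 0"
    and "\<forall>x\<in>X. distributed M lborel (F x) (\<lambda>t. ennreal (normal_density (\<mu> x) (\<sigma> x) t))"
    and "prob_space.indep_vars M (\<lambda>_. borel) F X"
    and "0 < \<epsilon>" and "\<epsilon> \<le> 1/4"
  shows "(\<forall>x\<in>X.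
           \<bar>p_tilde M F X x
            - (\<Sum>i<grid_n X \<mu> \<sigma> \<epsilon>.
                 (g_fun M F X x (grid_f X \<mu> \<sigma> \<epsilon> (Suc i)) + g_fun M F X x (grid_f X \<mu> \<sigma> \<epsilon> i)) / 2
                 * measure M {\<omega> \<in> space M. grid_f X \<mu> \<sigma> \<epsilon> i < ereal (F x \<omega>)
                                        \<and> ereal (F x \<omega>) \<le> grid_f X \<mu> \<sigma> \<epsilon> (Suc i)})\<bar> \<le> \<epsilon>)
         \<and> (\<lambda>e. real (grid_n X \<mu> \<sigma> e)) \<in> \<Theta>[at_right 0](\<lambda>e. sqrt (ln (1 / e)) / e)"
  proof -
  have "\<forall>x\<in>X.
           \<bar>p_tilde M F X x
            - (\<Sum>i<grid_n X \<mu> \<sigma> \<epsilon>.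
                 (g_fun M F X x (grid_f X \<mu> \<sigma> \<epsilon> (Suc i)) + g_fun M F X x (grid_f X \<mu> \<sigma> \<epsilon> i)) / 2
                 * measure M {\<omega> \<in> space M. grid_f X \<mu> \<sigma> \<epsilon> i < ereal (F x \<omega>)
                                        \<and> ereal (F x \<omega>) \<le> grid_f X \<mu> \<sigma> \<epsilon> (Suc i)})\<bar> \<le> \<epsilon>"
    using part1[OF assms] by blast
  moreover have "(\<lambda>e. real (grid_n X \<mu> \<sigma> e)) \<in> \<Theta>[at_right 0](\<lambda>e. sqrt (ln (1 / e)) / e)"
    using part2[OF assms(2,3,4)] .
  ultimately show ?thesis by blast
qed

end
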